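(* Let $k\ge1$, let $(\Lambda,d)$ be a $k$-graph, and let $p,q\in\mathbb{N}^k$. Then $q(p\Lambda)=(q+p)\Lambda$; that is, the dual of the $k$-graph $(p\Lambda,d_p)$ with respect to $q$ and the dual of $\Lambda$ with respect to $q+p$ have the same paths, the same range and source maps, the same composition, and the same degree map.
   Context: A $k$-graph is a pair $(\Lambda,d)$ where $\Lambda$ is a countable category and $d:\Lambda\to\mathbb{N}^k$ is a functor satisfying the factorisation property: if $\lambda$ is a morphism with $d(\lambda)=m+n$, then there are unique morphisms $\mu\in d^{-1}(m)$, $\nu\in d^{-1}(n)$ with $\lambda=\mu\nu$. Morphisms are called paths; vertices are identified with paths of degree $0$; $\Lambda^n:=d^{-1}(n)$. For $\lambda$ with $d(\lambda)=n$ and $l\le m\le n$, $\lambda(l,m)$ denotes the unique path of degree $m-l$ with $\lambda=\lambda(0,l)\lambda(l,m)\lambda(m,n)$. For $p\in\mathbb{N}^k$, the dual $k$-graph $p\Lambda$ has paths $\{\lambda\in\Lambda:d(\lambda)\ge p\}$, vertices $\Lambda^p$, range $r_p(\lambda)=\lambda(0,p)$, source $s_p(\lambda)=\lambda(d(\lambda)-p,d(\lambda))$, composition $\lambda\circ_p\mu=\lambda\,\mu(p,d(\mu))$ when $s_p(\lambda)=r_p(\mu)$, and degree $d_p(\lambda)=d(\lambda)-p$; $(p\Lambda,d_p)$ is again a $k$-graph, so its dual $q(p\Lambda)$ is defined by the same recipe. *)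

theory Defs
  imports Main "HOL-Library.Function_Algebras" "HOL-Library.Countable_Set"
begin

text \<open>Elements of N^k are modelled as functions nat => nat vanishing outside {..<k};
  addition and the partial order are pointwise.\<close>

definition NK :: "nat \<Rightarrow> (nat \<Rightarrow> nat) set" where
  "NK k = {x. \<forall>i\<ge>k. x i = 0}"

text \<open>A small category given by its set of morphisms (objects are identified with
  identity morphisms), range (codomain) and source (domain) maps, a composition
  (cmp f g means f after g, defined when src f = rng g), and a degree map.\<close>

record 'a kgraph =
  paths :: "'a set"
  rng :: "'a \<Rightarrow> 'a"
  src :: "'a \<Rightarrow> 'a"
  cmp :: "'a \<Rightarrow> 'a \<Rightarrow> 'a"
  deg :: "'a \<Rightarrow> nat \<Rightarrow> nat"

definition is_category :: "'a kgraph \<Rightarrow> bool" where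
  "is_category G \<longleftrightarrow>
     (\<forall>f\<in>paths G. rng G f \<in> paths G \<and> src G f \<in> paths G
        \<and> rng G (rng G f) = rng G f \<and> src G (rng G f) = rng G f
        \<and> rng G (src G f) = src G f \<and> src G (src G f) = src G f
        \<and> cmp G (rng G f) f = f \<and> cmp G f (src G f) = f)
   \<and> (\<forall>f\<in>paths G. \<forall>g\<in>paths G. src G f = rng G g \<longrightarrow>
        cmp G f g \<in> paths G \<and> rng G (cmp G f g) = rng G f \<and> src G (cmp G f g) = src G g)
   \<and> (\<forall>f\<in>paths G. \<forall>g\<in>paths G. \<forall>h\<in>paths G. src G f = rng G g \<longrightarrow> src G g = rng G h \<longrightarrow>
        cmp G (cmp G f g) h = cmp G f (cmp G g h))"

definition is_kgraph :: "nat \<Rightarrow> 'a kgraph \<Rightarrow> bool" where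
  "is_kgraph k G \<longleftrightarrow>
     is_category G \<and> countable (paths G)
   \<and> (\<forall>f\<in>paths G. deg G f \<in> NK k)
   \<and> (\<forall>f\<in>paths G. rng G f = f \<longrightarrow> deg G f = 0)
   \<and> (\<forall>f\<in>paths G. \<forall>g\<in>paths G. src G f = rng G g \<longrightarrow> deg G (cmp G f g) = deg G f + deg G g)
   \<and> (\<forall>l\<in>paths G. \<forall>m\<in>NK k. \<forall>n\<in>NK k. deg G l = m + n \<longrightarrow>
        (\<exists>!(\<mu>, \<nu>). \<mu> \<in> paths G \<and> \<nu> \<in> paths G \<and> deg G \<mu> = m \<and> deg G \<nu> = n
                 \<and> src G \<mu> = rng G \<nu> \<and> l = cmp G \<mu> \<nu>))"

definition seg :: "'a kgraph \<Rightarrow> 'a \<Rightarrow> (nat \<Rightarrow> nat) \<Rightarrow> (nat \<Rightarrow> nat) \<Rightarrow> 'a" where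
  "seg G x l m = (THE \<mu>. \<exists>\<alpha> \<beta>. \<alpha> \<in> paths G \<and> \<mu> \<in> paths G \<and> \<beta> \<in> paths G
       \<and> deg G \<alpha> = l \<and> deg G \<mu> = m - l \<and> deg G \<beta> = deg G x - m
       \<and> src G \<alpha> = rng G \<mu> \<and> src G \<mu> = rng G \<beta>
       \<and> x = cmp G (cmp G \<alpha> \<mu>) \<beta>)"

definition dual :: "(nat \<Rightarrow> nat) \<Rightarrow> 'a kgraph \<Rightarrow> 'a kgraph" where
  "dual p G = \<lparr> paths = {x \<in> paths G. p \<le> deg G x},
               rng = (\<lambda>x. seg G x 0 p),
               src = (\<lambda>x. seg G x (deg G x - p) (deg G x)),
               cmp = (\<lambda>x y. cmp G x (seg G y p (deg G y))),
               deg = (\<lambda>x. deg G x - p) \<rparr>"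

end

theory Submission imports Defs begin

lemma NK_le: "(x::nat\<Rightarrow>nat) \<le> y \<Longrightarrow> y \<in> NK k \<Longrightarrow> x \<in> NK k"
  unfolding NK_def le_fun_def by (simp, metis le_zero_eq)

lemma pw1: "(a::nat\<Rightarrow>nat) \<le> b \<Longrightarrow> b = a + (b - a)"
  by (intro ext; drule_tac x=x in le_funD; simp)
lemma pw2: "(a::nat\<Rightarrow>nat) + b - a = b"
  by (intro ext; simp)
lemma pw3: "(a::nat) \<le> a + b"
  by simp
lemma pw4: "(a::nat\<Rightarrow>nat) \<le> a + b"
  by (intro le_funI; simp)
lemma pw5: "(p::nat\<Rightarrow>nat) \<le> a \<Longrightarrow> a - p = m \<Longrightarrow> a = m + p"
  by (intro ext; drule_tac x=x in le_funD; drule_tac x=x in fun_cong; simp)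
lemma pw6: "(m::nat\<Rightarrow>nat) + p \<le> d \<Longrightarrow> p \<le> d - m"
  by (intro le_funI; drule_tac x=x in le_funD; simp)
lemma pw7: "(m::nat\<Rightarrow>nat) + p \<le> d \<Longrightarrow> (d - m) - p = (d - p) - m"
  by (intro ext; drule_tac x=x in le_funD; simp)
lemma pw8: "(m::nat\<Rightarrow>nat) + p \<le> d \<Longrightarrow> m + (d - m - p) = d - p"
  by (intro ext; drule_tac x=x in le_funD; simp)
lemma pw9: "(p::nat\<Rightarrow>nat) \<le> d \<Longrightarrow> d - (d - p) = p"
  by (intro ext; drule_tac x=x in le_funD; simp)
lemma pw10: "(p::nat\<Rightarrow>nat) \<le> d \<Longrightarrow> d - p - m + p \<le> d"
  by (intro le_funI; drule_tac x=x in le_funD; simp)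
lemma pw11: "(d::nat\<Rightarrow>nat) - p - q = d - (q + p)"
  by (intro ext; simp)
lemma pw12: "(m::nat\<Rightarrow>nat) + p \<le> d \<Longrightarrow> m \<le> d"
  by (intro le_funI; drule_tac x=x in le_funD; simp)
lemma pw13: "(m::nat\<Rightarrow>nat) \<le> d \<Longrightarrow> d - m \<le> d"
  by (intro le_funI; simp)
lemma pw14: "(p::nat\<Rightarrow>nat) \<le> a \<Longrightarrow> m + p \<le> d \<Longrightarrow> a - p = d - p - m \<Longrightarrow> a = d - m"
  by (intro ext; drule_tac x=x in le_funD; drule_tac x=x in le_funD; drule_tac x=x in fun_cong; simp)
lemma pw15: "(d::nat\<Rightarrow>nat) - d = 0"
  by (intro ext; simp)
lemma pw16: "(a::nat\<Rightarrow>nat) + (b + c) = (a + b) + c"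
  by (simp add: add.assoc)
lemma pw17: "(q::nat\<Rightarrow>nat) + p \<le> d \<longleftrightarrow> p \<le> d \<and> q \<le> d - p"
  unfolding le_fun_def plus_fun_apply minus_apply by (meson add_leD2 le_diff_conv2 le_diff_conv)
lemma pw18: "(a::nat\<Rightarrow>nat) - 0 = a"
  by (intro ext; simp)

lemma pw19: "(b::nat\<Rightarrow>nat) \<le> a + b"
  by (intro le_funI; simp)
lemma pw20: "(a::nat\<Rightarrow>nat) + b - b = a"
  by (intro ext; simp)
lemma pw21: "(p::nat\<Rightarrow>nat) \<le> a \<Longrightarrow> a - p = 0 \<Longrightarrow> a = p"
  by (intro ext; drule_tac x=x in le_funD; drule_tac x=x in fun_cong; simp)
lemma pw22: "(m::nat\<Rightarrow>nat) + p \<le> d \<Longrightarrow> p \<le> d"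
  by (intro le_funI; drule_tac x=x in le_funD; simp)
lemma pw23: "(p::nat\<Rightarrow>nat) - p = 0"
  by (intro ext; simp)

lemma dualF:
  "paths (dual p H) = {x \<in> paths H. p \<le> deg H x}" "rng (dual p H) x = seg H x 0 p"
  "src (dual p H) x = seg H x (deg H x - p) (deg H x)"
  "cmp (dual p H) x y = cmp H x (seg H y p (deg H y))" "deg (dual p H) x = deg H x - p"
  by (simp_all add: dual_def)

locale kg =
  fixes k :: nat and G :: "'a kgraph"
  assumes kg: "is_kgraph k G"
begin

abbreviation "PP \<equiv> paths G"
abbreviation "rr \<equiv> rng G"
abbreviation "ss \<equiv> src G"
abbreviation "cc \<equiv> cmp G"
abbreviation "dd \<equiv> deg G"
abbreviation "pre x m \<equiv> seg G x 0 m"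
abbreviation "suf x m \<equiv> seg G x m (dd x)"

lemma cat: "is_category G" using kg by (simp add: is_kgraph_def)

lemma ax1:
  assumes "f \<in> PP"
  shows "rr f \<in> PP" "ss f \<in> PP" "rr (rr f) = rr f" "ss (rr f) = rr f" "rr (ss f) = ss f"
    "ss (ss f) = ss f" "cc (rr f) f = f" "cc f (ss f) = f"
  using cat assms unfolding is_category_def by blast+

lemma ax2:
  assumes "f \<in> PP" "g \<in> PP" "ss f = rr g"
  shows "cc f g \<in> PP" "rr (cc f g) = rr f" "ss (cc f g) = ss g"
  using cat assms unfolding is_category_def by blast+

lemma assoc:
  assumes "f \<in> PP" "g \<in> PP" "h \<in> PP" "ss f = rr g" "ss g = rr h"
  shows "cc (cc f g) h = cc f (cc g h)"
  using cat assms unfolding is_category_def by blast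

lemma degNK: "f \<in> PP \<Longrightarrow> dd f \<in> NK k" using kg by (simp add: is_kgraph_def)
lemma deg_vert: "f \<in> PP \<Longrightarrow> rr f = f \<Longrightarrow> dd f = 0" using kg by (simp add: is_kgraph_def)
lemma deg_cmp: "f \<in> PP \<Longrightarrow> g \<in> PP \<Longrightarrow> ss f = rr g \<Longrightarrow> dd (cc f g) = dd f + dd g"
  using kg by (simp add: is_kgraph_def)
lemma fact: "l \<in> PP \<Longrightarrow> m \<in> NK k \<Longrightarrow> n \<in> NK k \<Longrightarrow> dd l = m + n \<Longrightarrow>
        (\<exists>!(\<mu>, \<nu>). \<mu> \<in> PP \<and> \<nu> \<in> PP \<and> dd \<mu> = m \<and> dd \<nu> = n
                 \<and> ss \<mu> = rr \<nu> \<and> l = cc \<mu> \<nu>)"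
  using kg unfolding is_kgraph_def by blast

lemma deg_r: "f \<in> PP \<Longrightarrow> dd (rr f) = 0" using ax1[of f] deg_vert[of "rr f"] by simp
lemma deg_s: "f \<in> PP \<Longrightarrow> dd (ss f) = 0" using ax1[of f] deg_vert[of "ss f"] by simp

lemma uniq2:
  assumes "a \<in> PP" "b \<in> PP" "a' \<in> PP" "b' \<in> PP" "ss a = rr b" "ss a' = rr b'"
    "cc a b = cc a' b'" "dd a = dd a'"
  shows "a = a' \<and> b = b'"
proof -
  have l: "cc a b \<in> PP" using ax2 assms by blast
  have e1: "dd (cc a b) = dd a + dd b" using deg_cmp assms by blast
  have e2: "dd (cc a b) = dd a + dd b'" using deg_cmp assms by metis
  hence "dd b' = dd b" using e1 by simp
  have "\<exists>!(\<mu>, \<nu>). \<mu> \<in> PP \<and> \<nu> \<in> PP \<and> dd \<mu> = dd a \<and> dd \<nu> = dd b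
                 \<and> ss \<mu> = rr \<nu> \<and> cc a b = cc \<mu> \<nu>"
    using fact[OF l degNK degNK e1] assms by blast
  then obtain z where z1: "case z of (\<mu>, \<nu>) \<Rightarrow> \<mu> \<in> PP \<and> \<nu> \<in> PP \<and> dd \<mu> = dd a \<and> dd \<nu> = dd b
                 \<and> ss \<mu> = rr \<nu> \<and> cc a b = cc \<mu> \<nu>"
     and z2: "\<And>y. (case y of (\<mu>, \<nu>) \<Rightarrow> \<mu> \<in> PP \<and> \<nu> \<in> PP \<and> dd \<mu> = dd a \<and> dd \<nu> = dd b
                 \<and> ss \<mu> = rr \<nu> \<and> cc a b = cc \<mu> \<nu>) \<Longrightarrow> y = z"
    by (elim ex1E) blast
  have "(a, b) = z" by (rule z2) (simp add: assms)
  moreover have "(a', b') = z" by (rule z2) (simp add: assms \<open>dd b' = dd b\<close>)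
  ultimately have "(a, b) = (a', b')" by (rule trans[OF _ sym])
  thus ?thesis by simp
qed

lemma vert:
  assumes "f \<in> PP" "dd f = 0" shows "rr f = f" "ss f = f"
proof -
  have "rr f = f \<and> f = ss f"
    by (rule uniq2) (use assms ax1[of f] deg_r[of f] in simp_all)
  thus "rr f = f" "ss f = f" by auto
qed

lemma seg0:
  assumes "a \<in> PP" "b \<in> PP" "ss a = rr b"
  shows "pre (cc a b) (dd a) = a"
proof -
  have ex: "\<exists>\<alpha> \<beta>. \<alpha> \<in> PP \<and> a \<in> PP \<and> \<beta> \<in> PP \<and> dd \<alpha> = 0 \<and> dd a = dd a - 0 \<and>
      dd \<beta> = dd (cc a b) - dd a \<and> ss \<alpha> = rr a \<and> ss a = rr \<beta> \<and> cc a b = cc (cc \<alpha> a) \<beta>"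
    apply (rule exI[of _ "rr a"], rule exI[of _ b])
    using assms ax1[of a] deg_r[of a] deg_cmp[of a b] pw2 pw18 by simp
  show ?thesis
  unfolding seg_def
  proof (rule the_equality, fact ex)
    fix \<mu> assume "\<exists>\<alpha> \<beta>. \<alpha> \<in> PP \<and> \<mu> \<in> PP \<and> \<beta> \<in> PP \<and> dd \<alpha> = 0 \<and> dd \<mu> = dd a - 0 \<and>
      dd \<beta> = dd (cc a b) - dd a \<and> ss \<alpha> = rr \<mu> \<and> ss \<mu> = rr \<beta> \<and> cc a b = cc (cc \<alpha> \<mu>) \<beta>"
    then obtain \<alpha> \<beta> where h: "\<alpha> \<in> PP" "\<mu> \<in> PP" "\<beta> \<in> PP" "dd \<alpha> = 0" "dd \<mu> = dd a"
       "ss \<alpha> = rr \<mu>" "ss \<mu> = rr \<beta>" "cc a b = cc (cc \<alpha> \<mu>) \<beta>" using pw18 by auto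
    have "\<alpha> = rr \<mu>" using vert[of \<alpha>] h by simp
    hence "cc \<alpha> \<mu> = \<mu>" using ax1 h by simp
    thus "\<mu> = a" using uniq2[of a b \<mu> \<beta>] assms h by auto
  qed
qed

lemma segE:
  assumes "a \<in> PP" "b \<in> PP" "ss a = rr b"
  shows "suf (cc a b) (dd a) = b"
proof -
  have ab: "cc a b \<in> PP" "ss (cc a b) = ss b" using ax2 assms by auto
  have ex: "\<exists>\<alpha> \<beta>. \<alpha> \<in> PP \<and> b \<in> PP \<and> \<beta> \<in> PP \<and> dd \<alpha> = dd a \<and> dd b = dd (cc a b) - dd a \<and>
      dd \<beta> = dd (cc a b) - dd (cc a b) \<and> ss \<alpha> = rr b \<and> ss b = rr \<beta> \<and> cc a b = cc (cc \<alpha> b) \<beta>"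
    apply (rule exI[of _ a], rule exI[of _ "ss b"])
    using assms ax1[of b] ax1[of "cc a b"] ab deg_s[of b] deg_cmp[of a b] pw2 pw15 by simp
  show ?thesis
  unfolding seg_def
  proof (rule the_equality, fact ex)
    fix \<mu> assume "\<exists>\<alpha> \<beta>. \<alpha> \<in> PP \<and> \<mu> \<in> PP \<and> \<beta> \<in> PP \<and> dd \<alpha> = dd a \<and> dd \<mu> = dd (cc a b) - dd a \<and>
      dd \<beta> = dd (cc a b) - dd (cc a b) \<and> ss \<alpha> = rr \<mu> \<and> ss \<mu> = rr \<beta> \<and> cc a b = cc (cc \<alpha> \<mu>) \<beta>"
    then obtain \<alpha> \<beta> where h: "\<alpha> \<in> PP" "\<mu> \<in> PP" "\<beta> \<in> PP" "dd \<alpha> = dd a" "dd \<beta> = 0"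
       "ss \<alpha> = rr \<mu>" "ss \<mu> = rr \<beta>" "cc a b = cc (cc \<alpha> \<mu>) \<beta>" using pw15 by auto
    have "\<beta> = ss \<mu>" using vert[of \<beta>] h by simp
    moreover have "cc \<alpha> \<mu> \<in> PP" "ss (cc \<alpha> \<mu>) = ss \<mu>" using ax2 h by auto
    ultimately have "cc (cc \<alpha> \<mu>) \<beta> = cc \<alpha> \<mu>" using ax1(8)[of "cc \<alpha> \<mu>"] by simp
    thus "\<mu> = b" using uniq2[of a b \<alpha> \<mu>] assms h by auto
  qed
qed

lemma pre_cmp: "a \<in> PP \<Longrightarrow> b \<in> PP \<Longrightarrow> ss a = rr b \<Longrightarrow> m = dd a \<Longrightarrow> pre (cc a b) m = a"
  using seg0 by simp
lemma suf_cmp: "a \<in> PP \<Longrightarrow> b \<in> PP \<Longrightarrow> ss a = rr b \<Longrightarrow> m = dd a \<Longrightarrow> suf (cc a b) m = b"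
  using segE by simp

lemma fac:
  assumes "x \<in> PP" "m \<le> dd x"
  shows "pre x m \<in> PP" "suf x m \<in> PP" "dd (pre x m) = m" "dd (suf x m) = dd x - m"
    "ss (pre x m) = rr (suf x m)" "cc (pre x m) (suf x m) = x"
    "rr (pre x m) = rr x" "ss (suf x m) = ss x"
proof -
  have mN: "m \<in> NK k" using NK_le assms degNK by blast
  have nN: "dd x - m \<in> NK k" using NK_le[OF pw13[OF assms(2)]] assms degNK by blast
  obtain a b where h: "a \<in> PP" "b \<in> PP" "dd a = m" "dd b = dd x - m" "ss a = rr b" "x = cc a b"
    using fact[OF assms(1) mN nN pw1[OF assms(2)]] by blast
  have "pre x m = a" "suf x m = b" using pre_cmp suf_cmp h by auto
  thus "pre x m \<in> PP" "suf x m \<in> PP" "dd (pre x m) = m" "dd (suf x m) = dd x - m"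
    "ss (pre x m) = rr (suf x m)" "cc (pre x m) (suf x m) = x"
    "rr (pre x m) = rr x" "ss (suf x m) = ss x" using h ax2 by auto
qed

lemma suf0: "x \<in> PP \<Longrightarrow> suf x 0 = x"
  using suf_cmp[of "rr x" x 0] ax1[of x] deg_r[of x] by simp
lemma pre_full: "x \<in> PP \<Longrightarrow> pre x (dd x) = x"
  using pre_cmp[of x "ss x" "dd x"] ax1[of x] by simp
lemma suf_full: "x \<in> PP \<Longrightarrow> suf x (dd x) = ss x"
  using suf_cmp[of x "ss x" "dd x"] ax1[of x] by simp

lemma suf_suf:
  assumes "x \<in> PP" "m + n \<le> dd x"
  shows "suf (suf x m) n = suf x (m + n)"
proof -
  have m: "m \<le> dd x" using pw12 assms by blast
  define y where "y = suf x m"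
  have n: "n \<le> dd y" unfolding y_def using fac(4)[OF assms(1) m] pw6[OF assms(2)] by simp
  note F1 = fac[OF assms(1) m, folded y_def] and F2 = fac[OF F1(2) n]
  have c1: "ss (pre x m) = rr (pre y n)" using F1(5) F2(7) by simp
  have "cc (cc (pre x m) (pre y n)) (suf y n) = cc (pre x m) (cc (pre y n) (suf y n))"
    by (rule assoc) (use F1 F2 c1 in auto)
  also have "\<dots> = x" using F1(6) F2(6) by simp
  finally have e: "cc (cc (pre x m) (pre y n)) (suf y n) = x" .
  have h: "cc (pre x m) (pre y n) \<in> PP" "ss (cc (pre x m) (pre y n)) = rr (suf y n)"
    using ax2[OF F1(1) F2(1) c1] F2(5) by auto
  have "dd (cc (pre x m) (pre y n)) = m + n"
    using deg_cmp[OF F1(1) F2(1) c1] F1(3) F2(3) by simp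
  hence "suf x (m + n) = suf y n" using suf_cmp[OF h(1) F2(2) h(2)] e by simp
  thus ?thesis unfolding y_def by simp
qed

lemma mid:
  assumes "x \<in> PP" "m + p \<le> dd x"
  shows "suf (pre x (m + p)) m = pre (suf x m) p"
proof -
  define a where "a = pre x (m + p)"
  define b where "b = suf x (m + p)"
  note F = fac[OF assms(1) assms(2), folded a_def b_def]
  have m: "m \<le> dd a" using F(3) pw4 by simp
  note G = fac[OF F(1) m]
  have c1: "ss (suf a m) = rr b" using G(8) F(5) by simp
  have "cc (pre a m) (cc (suf a m) b) = cc (cc (pre a m) (suf a m)) b"
    by (rule assoc[symmetric]) (use F G c1 in auto)
  also have "\<dots> = x" using G(6) F(6) by simp
  finally have e: "cc (pre a m) (cc (suf a m) b) = x" .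
  have h: "cc (suf a m) b \<in> PP" "ss (pre a m) = rr (cc (suf a m) b)"
    using ax2[OF G(2) F(2) c1] G(5) by auto
  have "suf x m = cc (suf a m) b"
    using suf_cmp[OF G(1) h(1) h(2)] G(3) e by simp
  moreover have "dd (suf a m) = p" using G F pw2 by simp
  ultimately show ?thesis using pre_cmp[OF G(2) F(2) c1] unfolding a_def by simp
qed

lemma lemA:
  assumes x: "x \<in> PP" and mp: "m + p \<le> dd x"
  shows "seg (dual p G) x 0 m = pre x (m + p)"
proof -
  define a where "a = pre x (m + p)"
  define b where "b = suf x (m + p)"
  note FA = fac[OF x mp, folded a_def b_def]
  have pa: "p \<le> dd a" using FA(3) pw19 by simp
  define \<alpha> where "\<alpha> = pre a p"
  note FB = fac[OF FA(1) pa, folded \<alpha>_def]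
  have mx: "m \<le> dd x" using pw12[OF mp] .
  define \<beta> where "\<beta> = suf x m"
  note FC = fac[OF x mx, folded \<beta>_def]
  have pb: "p \<le> dd \<beta>" using FC(4) pw6[OF mp] by simp
  have ex: "\<exists>\<alpha> \<beta>. \<alpha> \<in> paths (dual p G) \<and> a \<in> paths (dual p G) \<and> \<beta> \<in> paths (dual p G) \<and>
     deg (dual p G) \<alpha> = 0 \<and> deg (dual p G) a = m - 0 \<and> deg (dual p G) \<beta> = deg (dual p G) x - m \<and>
     src (dual p G) \<alpha> = rng (dual p G) a \<and> src (dual p G) a = rng (dual p G) \<beta> \<and>
     x = cmp (dual p G) (cmp (dual p G) \<alpha> a) \<beta>"
    unfolding dualF
  proof (intro exI conjI)
    show "\<alpha> \<in> {x \<in> PP. p \<le> dd x}" using FB by simp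
    show "a \<in> {x \<in> PP. p \<le> dd x}" using FA pa by simp
    show "\<beta> \<in> {x \<in> PP. p \<le> dd x}" using FC pb by simp
    show "dd \<alpha> - p = 0" using FB(3) pw23 by simp
    show "dd a - p = m - 0" using FA(3) pw20 pw18 by simp
    show "dd \<beta> - p = dd x - p - m" using FC(4) pw7[OF mp] by simp
    show "suf \<alpha> (dd \<alpha> - p) = pre a p" using FB(3) pw23 suf0[OF FB(1)] \<alpha>_def by simp
    show "suf a (dd a - p) = pre \<beta> p" using FA(3) pw20 mid[OF x mp] a_def \<beta>_def by simp
    have "suf \<beta> p = b" using suf_suf[OF x mp] \<beta>_def b_def by simp
    thus "x = cc (cc \<alpha> (seg G a p (dd a))) (seg G \<beta> p (dd \<beta>))" using FB(6) FA(6) by simp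
  qed
  show ?thesis unfolding seg_def[of "dual p G"] a_def[symmetric]
  proof (rule the_equality, fact ex)
    fix \<mu> assume "\<exists>\<alpha> \<beta>. \<alpha> \<in> paths (dual p G) \<and> \<mu> \<in> paths (dual p G) \<and> \<beta> \<in> paths (dual p G) \<and>
     deg (dual p G) \<alpha> = 0 \<and> deg (dual p G) \<mu> = m - 0 \<and> deg (dual p G) \<beta> = deg (dual p G) x - m \<and>
     src (dual p G) \<alpha> = rng (dual p G) \<mu> \<and> src (dual p G) \<mu> = rng (dual p G) \<beta> \<and>
     x = cmp (dual p G) (cmp (dual p G) \<alpha> \<mu>) \<beta>"
    then obtain \<alpha>' \<beta>' where h: "\<alpha>' \<in> PP" "p \<le> dd \<alpha>'" "\<mu> \<in> PP" "p \<le> dd \<mu>" "\<beta>' \<in> PP" "p \<le> dd \<beta>'"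
      "dd \<alpha>' - p = 0" "dd \<mu> - p = m" "suf \<alpha>' (dd \<alpha>' - p) = pre \<mu> p"
      "suf \<mu> (dd \<mu> - p) = pre \<beta>' p" "x = cc (cc \<alpha>' (suf \<mu> p)) (suf \<beta>' p)"
      unfolding dualF pw18 by auto
    have da: "dd \<alpha>' = p" using pw21 h by blast
    have dm: "dd \<mu> = m + p" using pw5 h by blast
    have "\<alpha>' = pre \<mu> p" using h(9) da pw23 suf0[OF h(1)] by simp
    note FM = fac[OF h(3) h(4)]
    have e1: "cc \<alpha>' (suf \<mu> p) = \<mu>" using FM(6) \<open>\<alpha>' = pre \<mu> p\<close> by simp
    have xe: "cc \<mu> (suf \<beta>' p) = x" using h(11) e1 by simp
    note FM2 = fac[OF h(3) pw13[OF h(4)]]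
    note FB2 = fac[OF h(5) h(6)]
    have c: "ss \<mu> = rr (suf \<beta>' p)" using FM2(8) h(10) FB2(5) by simp
    show "\<mu> = a" using pre_cmp[OF h(3) FB2(2) c dm[symmetric]] xe a_def by simp
  qed
qed

lemma lemB:
  assumes x: "x \<in> PP" and mp: "m + p \<le> dd x"
  shows "seg (dual p G) x m (deg (dual p G) x) = suf x m"
proof -
  have px: "p \<le> dd x" using pw22[OF mp] .
  have mx: "m \<le> dd x" using pw12[OF mp] .
  define a where "a = pre x (m + p)"
  define b where "b = suf x (m + p)"
  note FA = fac[OF x mp, folded a_def b_def]
  define y where "y = suf x m"
  note FC = fac[OF x mx, folded y_def]
  define \<beta> where "\<beta> = suf x (dd x - p)"
  note FE = fac[OF x pw13[OF px], folded \<beta>_def]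
  have db: "dd \<beta> = p" using FE(4) pw9[OF px] by simp
  have ex: "\<exists>\<alpha> \<beta>. \<alpha> \<in> paths (dual p G) \<and> y \<in> paths (dual p G) \<and> \<beta> \<in> paths (dual p G) \<and>
     deg (dual p G) \<alpha> = m \<and> deg (dual p G) y = deg (dual p G) x - m \<and>
     deg (dual p G) \<beta> = deg (dual p G) x - deg (dual p G) x \<and>
     src (dual p G) \<alpha> = rng (dual p G) y \<and> src (dual p G) y = rng (dual p G) \<beta> \<and>
     x = cmp (dual p G) (cmp (dual p G) \<alpha> y) \<beta>"
    unfolding dualF
  proof (intro exI conjI)
    show "a \<in> {x \<in> PP. p \<le> dd x}" using FA pw19 by simp
    show "y \<in> {x \<in> PP. p \<le> dd x}" using FC pw6[OF mp] by simp
    show "\<beta> \<in> {x \<in> PP. p \<le> dd x}" using FE db by simp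
    show "dd a - p = m" using FA(3) pw20 by simp
    show "dd y - p = dd x - p - m" using FC(4) pw7[OF mp] by simp
    show "dd \<beta> - p = dd x - p - (dd x - p)" using db pw23 pw15 by simp
    show "suf a (dd a - p) = pre y p" using FA(3) pw20 mid[OF x mp] a_def y_def by simp
    have s1: "m + (dd x - m - p) \<le> dd x" using pw8[OF mp] pw13[OF px] by simp
    have "suf y (dd y - p) = suf x (dd x - p)"
      using suf_suf[OF x s1] pw8[OF mp] FC(4) y_def by simp
    thus "suf y (dd y - p) = pre \<beta> p" using pre_full[OF FE(2)] db \<beta>_def by simp
    have "suf \<beta> p = ss x" using suf_full[OF FE(2)] db FE(8) by simp
    moreover have "suf y p = b" using suf_suf[OF x mp] y_def b_def by simp
    ultimately show "x = cc (cc a (seg G y p (dd y))) (seg G \<beta> p (dd \<beta>))"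
      using FA(6) ax1(8)[OF x] by simp
  qed
  show ?thesis unfolding seg_def[of "dual p G"] y_def[symmetric]
  proof (rule the_equality, fact ex)
    fix \<mu> assume "\<exists>\<alpha> \<beta>. \<alpha> \<in> paths (dual p G) \<and> \<mu> \<in> paths (dual p G) \<and> \<beta> \<in> paths (dual p G) \<and>
     deg (dual p G) \<alpha> = m \<and> deg (dual p G) \<mu> = deg (dual p G) x - m \<and>
     deg (dual p G) \<beta> = deg (dual p G) x - deg (dual p G) x \<and>
     src (dual p G) \<alpha> = rng (dual p G) \<mu> \<and> src (dual p G) \<mu> = rng (dual p G) \<beta> \<and>
     x = cmp (dual p G) (cmp (dual p G) \<alpha> \<mu>) \<beta>"
    then obtain \<alpha>' \<beta>' where h: "\<alpha>' \<in> PP" "p \<le> dd \<alpha>'" "\<mu> \<in> PP" "p \<le> dd \<mu>" "\<beta>' \<in> PP" "p \<le> dd \<beta>'"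
      "dd \<alpha>' - p = m" "dd \<mu> - p = dd x - p - m" "dd \<beta>' - p = 0"
      "suf \<alpha>' (dd \<alpha>' - p) = pre \<mu> p"
      "suf \<mu> (dd \<mu> - p) = pre \<beta>' p" "x = cc (cc \<alpha>' (suf \<mu> p)) (suf \<beta>' p)"
      unfolding dualF pw15 by auto
    have da: "dd \<alpha>' = m + p" using pw5 h by blast
    have dm: "dd \<mu> = dd x - m" using pw14[OF h(4) mp h(8)] .
    have db': "dd \<beta>' = p" using pw21 h by blast
    have H1: "suf \<alpha>' m = pre \<mu> p" using h(10) da pw20 by simp
    have pb: "pre \<beta>' p = \<beta>'" using pre_full[OF h(5)] db' by simp
    have sb: "suf \<beta>' p = ss \<beta>'" using suf_full[OF h(5)] db' by simp
    note FA' = fac[OF h(1) pw4[of m p, folded da]]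
    note FM = fac[OF h(3) h(4)]
    note FM2 = fac[OF h(3) pw13[OF h(4)]]
    have c: "ss \<alpha>' = rr (suf \<mu> p)" using FA'(8) H1 FM(5) by simp
    note Gm = ax2[OF h(1) FM(2) c]
    have sg: "ss (cc \<alpha>' (suf \<mu> p)) = ss \<beta>'" using Gm(3) FM(8) FM2(8) h(11) pb by simp
    have xg: "cc \<alpha>' (suf \<mu> p) = x" using h(12) sb sg ax1(8)[OF Gm(1)] by simp
    have s2: "suf x (m + p) = suf \<mu> p" using suf_cmp[OF h(1) FM(2) c da[symmetric]] xg by simp
    have me: "cc (suf \<alpha>' m) (suf \<mu> p) = \<mu>" using FM(6) H1 by simp
    have c2: "ss (suf \<alpha>' m) = rr (suf \<mu> p)" using FA'(8) c by simp
    have "cc (pre \<alpha>' m) (cc (suf \<alpha>' m) (suf \<mu> p)) = cc (cc (pre \<alpha>' m) (suf \<alpha>' m)) (suf \<mu> p)"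
      by (rule assoc[symmetric]) (use FA' FM c2 in auto)
    also have "\<dots> = x" using FA'(6) xg by simp
    finally have e: "cc (pre \<alpha>' m) (cc (suf \<alpha>' m) (suf \<mu> p)) = x" .
    note Gm2 = ax2[OF FA'(2) FM(2) c2]
    have c3: "ss (pre \<alpha>' m) = rr (cc (suf \<alpha>' m) (suf \<mu> p))" using Gm2(2) FA'(5) by simp
    show "\<mu> = y" using suf_cmp[OF FA'(1) Gm2(1) c3] FA'(3) e me y_def by simp
  qed
qed

end

theorem proposition3p4:
  fixes G :: "'a kgraph" and k :: nat and p q :: "nat \<Rightarrow> nat"
  assumes "k \<ge> 1" and "is_kgraph k G" and "p \<in> NK k" and "q \<in> NK k"
  shows "paths (dual q (dual p G)) = paths (dual (q + p) G)
    \<and> (\<forall>x\<in>paths (dual (q + p) G).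
          rng (dual q (dual p G)) x = rng (dual (q + p) G) x
        \<and> src (dual q (dual p G)) x = src (dual (q + p) G) x
        \<and> deg (dual q (dual p G)) x = deg (dual (q + p) G) x)
    \<and> (\<forall>x\<in>paths (dual (q + p) G). \<forall>y\<in>paths (dual (q + p) G).
          src (dual (q + p) G) x = rng (dual (q + p) G) y \<longrightarrow>
          cmp (dual q (dual p G)) x y = cmp (dual (q + p) G) x y)"
proof -
  interpret kg k G using assms(2) by (unfold_locales)
  have P: "paths (dual q (dual p G)) = paths (dual (q + p) G)"
    unfolding dualF using pw17 by auto
  have R: "rng (dual q (dual p G)) x = rng (dual (q + p) G) x
        \<and> src (dual q (dual p G)) x = src (dual (q + p) G) x
        \<and> deg (dual q (dual p G)) x = deg (dual (q + p) G) x"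
    if x: "x \<in> paths (dual (q + p) G)" for x
  proof -
    have x1: "x \<in> PP" and qp: "q + p \<le> dd x" using x unfolding dualF by auto
    have px: "p \<le> dd x" using pw22[OF qp] .
    have "rng (dual q (dual p G)) x = pre x (q + p)"
      unfolding dualF(2) using lemA[OF x1 qp] .
    moreover have "src (dual q (dual p G)) x = suf x (dd x - (q + p))"
      unfolding dualF(3) using lemB[OF x1 pw10[OF px, of q]] by (simp add: pw11 dualF(5))
    moreover have "deg (dual q (dual p G)) x = dd x - (q + p)"
      unfolding dualF(5) using pw11 by simp
    ultimately show ?thesis unfolding dualF by simp
  qed
  have C: "cmp (dual q (dual p G)) x y = cmp (dual (q + p) G) x y"
    if x: "x \<in> paths (dual (q + p) G)" and y: "y \<in> paths (dual (q + p) G)" for x y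
  proof -
    have y1: "y \<in> PP" and qp: "q + p \<le> dd y" using y unfolding dualF by auto
    have "seg (dual p G) y q (deg (dual p G) y) = suf y q" using lemB[OF y1 qp] .
    hence "cmp (dual q (dual p G)) x y = cc x (suf (suf y q) p)"
      unfolding dualF(4) by (simp add: dualF)
    also have "\<dots> = cc x (suf y (q + p))" using suf_suf[OF y1 qp] by simp
    finally show ?thesis unfolding dualF by simp
  qed
  show ?thesis using P R C by blast
qed

end
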